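(* Let $X$ be a finite set of alternatives and let $t$ be a full support transition function. For each $A \in \mathcal{X}_2$ let $\nu_A$ be the unique stationary distribution of the Markov chain $M_A$. The following are equivalent: (1) $t$ is menu invariant, i.e. $\nu_A=\nu_B$ for all $A,B\in\mathcal{X}_2$; (2) $t$ is locally invariant with respect to $\nu_A$ for every $A\in\mathcal{X}_2$; (3) there exists some $A\in\mathcal{X}_2$ such that $t$ is locally invariant with respect to $\nu_A$. Here $t$ is locally invariant with respect to a distribution $\nu\in\Delta(\mathcal{L}(X))$ if for every $A\subseteq X$ with $|A|\ge 3$ and every $x\in A$, $$\sum_{\succ\in N(x,A)}\nu(\succ)\,t(x,\succ)=\sum_{y\in A\setminus\{x\}}\ \sum_{\succ\in N(x,A)\cap N(y,A\setminus\{x\})}\nu(\succ)\,t(y,\succ)$$ as elements (vectors) of $\mathbb{R}^{\mathcal{L}(X)}$.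
   Context: $X$ is a finite set; $\mathcal{X}$ is the collection of nonempty subsets of $X$, and $\mathcal{X}_2$ the collection of subsets of $X$ with at least two elements. $\mathcal{L}(X)$ is the set of linear orders on $X$, $\Delta(\mathcal{L}(X))$ the set of probability distributions on it, and $\mathrm{int}\,\Delta(\mathcal{L}(X))$ the full support distributions. For $\succ\in\mathcal{L}(X)$ and $A\in\mathcal{X}$, $M(\succ,A)$ is the $\succ$-maximal element of $A$, and $N(x,A)=\{\succ : x\succ y \text{ for all } y\in A\setminus\{x\}\}$. A transition function is a map $t:X\times\mathcal{L}(X)\to\Delta(\mathcal{L}(X))$; it is full support if it takes values in $\mathrm{int}\,\Delta(\mathcal{L}(X))$. Write $t_{\succ'}(x,\succ)$ for the probability that $t(x,\succ)$ assigns to $\succ'$. For each $A\in\mathcal{X}$, $M_A$ is the Markov transition matrix on $\mathcal{L}(X)$ with entries $m_A(\succ,\succ')=t_{\succ'}(M(\succ,A),\succ)$; when $t$ is full support, $M_A$ is ergodic with unique stationary distribution $\nu_A$. *)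

theory Defs
  imports Complex_Main
begin

text \<open>The finite set X of alternatives is the universe of a finite type 'a.
  A linear order on X is a relation r with linear_order r (reflexive, antisymmetric,
  transitive, total on UNIV); (x,y) in r means x is ranked weakly above y, so
  x is strictly preferred to y iff (x,y) in r and x ~= y.\<close>

definition LX :: "('a \<times> 'a) set set" where
  "LX = {r. linear_order r}"

definition Mx :: "('a \<times> 'a) set \<Rightarrow> 'a set \<Rightarrow> 'a" where
  "Mx r A = (THE x. x \<in> A \<and> (\<forall>y\<in>A. (x, y) \<in> r))"

definition Nx :: "'a \<Rightarrow> 'a set \<Rightarrow> ('a \<times> 'a) set set" where
  "Nx x A = {r \<in> LX. \<forall>y \<in> A - {x}. (x, y) \<in> r \<and> x \<noteq> y}"

definition X2 :: "'a set set" where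
  "X2 = {A. 2 \<le> card A}"

text \<open>Probability distributions on L(X), as functions restricted to LX.\<close>
definition is_dist :: "(('a \<times> 'a) set \<Rightarrow> real) \<Rightarrow> bool" where
  "is_dist \<nu> \<longleftrightarrow> (\<forall>r\<in>LX. 0 \<le> \<nu> r) \<and> (\<Sum>r\<in>LX. \<nu> r) = 1"

text \<open>Transition function t : X x L(X) -> Delta(L(X)); t x r r' is the probability
  t_{r'}(x,r). Full support: all values strictly positive.\<close>
definition full_support_transition ::
  "('a \<Rightarrow> ('a \<times> 'a) set \<Rightarrow> ('a \<times> 'a) set \<Rightarrow> real) \<Rightarrow> bool" where
  "full_support_transition t \<longleftrightarrow>
     (\<forall>x r. r \<in> LX \<longrightarrow> (\<forall>r'\<in>LX. 0 < t x r r') \<and> (\<Sum>r'\<in>LX. t x r r') = 1)"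

text \<open>nu is a stationary distribution of the Markov matrix M_A with entries
  m_A(r,r') = t_{r'}(M(r,A), r).\<close>
definition stationary ::
  "('a \<Rightarrow> ('a \<times> 'a) set \<Rightarrow> ('a \<times> 'a) set \<Rightarrow> real) \<Rightarrow> 'a set
     \<Rightarrow> (('a \<times> 'a) set \<Rightarrow> real) \<Rightarrow> bool" where
  "stationary t A \<nu> \<longleftrightarrow> is_dist \<nu> \<and>
     (\<forall>r'\<in>LX. \<nu> r' = (\<Sum>r\<in>LX. \<nu> r * t (Mx r A) r r'))"

definition menu_invariant ::
  "('a set \<Rightarrow> ('a \<times> 'a) set \<Rightarrow> real) \<Rightarrow> bool" where
  "menu_invariant \<nu> \<longleftrightarrow> (\<forall>A\<in>X2. \<forall>B\<in>X2. \<forall>r\<in>LX. \<nu> A r = \<nu> B r)"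

definition locally_invariant ::
  "('a \<Rightarrow> ('a \<times> 'a) set \<Rightarrow> ('a \<times> 'a) set \<Rightarrow> real)
     \<Rightarrow> (('a \<times> 'a) set \<Rightarrow> real) \<Rightarrow> bool" where
  "locally_invariant t \<nu> \<longleftrightarrow>
     (\<forall>A. 3 \<le> card A \<longrightarrow> (\<forall>x\<in>A. \<forall>r'\<in>LX.
        (\<Sum>r\<in>Nx x A. \<nu> r * t x r r') =
        (\<Sum>y\<in>A - {x}. \<Sum>r\<in>Nx x A \<inter> Nx y (A - {x}). \<nu> r * t y r r')))"

end

theory Submission
  imports Defs
begin

lemma LX_props:
  assumes "r \<in> LX"
  shows "(x,x) \<in> r" "(x,y) \<in> r \<Longrightarrow> (y,z) \<in> r \<Longrightarrow> (x,z) \<in> r"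
    "(x,y) \<in> r \<Longrightarrow> (y,x) \<in> r \<Longrightarrow> x = y"
    "x \<noteq> y \<Longrightarrow> (x,y) \<in> r \<or> (y,x) \<in> r"
  using assms unfolding LX_def linear_order_on_def partial_order_on_def preorder_on_def
    refl_on_def trans_def antisym_def total_on_def by blast+

lemma max_exists:
  assumes "r \<in> LX" "finite A" "A \<noteq> {}"
  shows "\<exists>x. x \<in> A \<and> (\<forall>y\<in>A. (x,y) \<in> r)"
  using assms(2,3)
proof (induction A rule: finite_ne_induct)
  case (singleton x) then show ?case using LX_props(1)[OF assms(1)] by auto
next
  case (insert a F)
  then obtain m where m: "m \<in> F" "\<forall>y\<in>F. (m,y) \<in> r" by blast
  show ?case
  proof (cases "(a,m) \<in> r")
    case True then show ?thesis using m LX_props[OF assms(1)] by blast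
  next
    case False
    then have "(m,a) \<in> r" using LX_props[OF assms(1)] by metis
    then show ?thesis using m by blast
  qed
qed

lemma Mx_eq:
  assumes "r \<in> LX" "x \<in> A" "\<forall>y\<in>A. (x,y) \<in> r"
  shows "Mx r A = x"
  unfolding Mx_def
  by (rule the_equality) (use assms LX_props(3)[OF assms(1)] in blast)+

lemma Mx_max:
  fixes A :: "'a::finite set"
  assumes "r \<in> LX" "A \<noteq> {}"
  shows "Mx r A \<in> A" "\<forall>y\<in>A. (Mx r A, y) \<in> r"
proof -
  have fA: "finite A" by simp
  from max_exists[OF assms(1) fA assms(2)]
  obtain x where x: "x \<in> A" "\<forall>y\<in>A. (x,y) \<in> r" by blast
  have "Mx r A = x" by (rule Mx_eq[OF assms(1) x])
  then show "Mx r A \<in> A" "\<forall>y\<in>A. (Mx r A, y) \<in> r" using x by auto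
qed

lemma Nx_iff:
  fixes A :: "'a::finite set"
  assumes "x \<in> A"
  shows "Nx x A = {r \<in> LX. Mx r A = x}"
proof -
  have "r \<in> Nx x A \<longleftrightarrow> r \<in> LX \<and> Mx r A = x" for r
  proof
    assume r: "r \<in> Nx x A"
    then have "r \<in> LX" unfolding Nx_def by auto
    moreover have "\<forall>y\<in>A. (x,y) \<in> r"
    proof
      fix y assume yA: "y \<in> A"
      show "(x,y) \<in> r"
      proof (cases "y = x")
        case True then show ?thesis using LX_props(1)[OF \<open>r \<in> LX\<close>] by simp
      next
        case False then show ?thesis using r yA unfolding Nx_def by blast
      qed
    qed
    ultimately show "r \<in> LX \<and> Mx r A = x" using Mx_eq[OF _ assms] by blast
  next
    assume r: "r \<in> LX \<and> Mx r A = x"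
    then show "r \<in> Nx x A" using Mx_max[of r A] assms unfolding Nx_def by auto
  qed
  then show ?thesis by auto
qed

lemma Mx_remove:
  fixes A :: "'a::finite set"
  assumes "r \<in> LX" "x \<in> A" "Mx r A \<noteq> x"
  shows "Mx r (A - {x}) = Mx r A"
  using Mx_max[OF assms(1)] assms by (intro Mx_eq) auto

lemma finite_LX [simp]: "finite (LX :: ('a::finite \<times> 'a) set set)"
  by simp

lemma Nx_sub: "Nx x A \<subseteq> LX"
  unfolding Nx_def by blast

definition TT :: "('a \<Rightarrow> ('a \<times> 'a) set \<Rightarrow> ('a \<times> 'a) set \<Rightarrow> real)
   \<Rightarrow> (('a \<times> 'a) set \<Rightarrow> real) \<Rightarrow> 'a set \<Rightarrow> ('a \<times> 'a) set \<Rightarrow> real" where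
  "TT t \<nu> C r' = (\<Sum>r\<in>LX. \<nu> r * t (Mx r C) r r')"

lemma key:
  fixes A :: "'a::finite set"
  assumes "x \<in> A" "A - {x} \<noteq> {}"
  shows "(\<Sum>r\<in>Nx x A. \<nu> r * t x r r') -
        (\<Sum>y\<in>A - {x}. \<Sum>r\<in>Nx x A \<inter> Nx y (A - {x}). \<nu> r * t y r r')
       = TT t \<nu> A r' - TT t \<nu> (A - {x}) r'"
proof -
  have L: "(\<Sum>r\<in>Nx x A. \<nu> r * t x r r') = (\<Sum>r\<in>LX. if Mx r A = x then \<nu> r * t x r r' else 0)"
    unfolding Nx_iff[OF assms(1)] by (simp add: sum.inter_filter)
  have "(\<Sum>y\<in>A - {x}. \<Sum>r\<in>Nx x A \<inter> Nx y (A - {x}). \<nu> r * t y r r')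
      = (\<Sum>y\<in>A - {x}. \<Sum>r\<in>Nx x A. if Mx r (A - {x}) = y then \<nu> r * t y r r' else 0)"
  proof (rule sum.cong[OF refl])
    fix y :: 'a assume y: "y \<in> A - {x}"
    have "Nx x A \<inter> Nx y (A - {x}) = {r \<in> Nx x A. Mx r (A - {x}) = y}"
      unfolding Nx_iff[OF assms(1)] Nx_iff[OF y] by auto
    then show "(\<Sum>r\<in>Nx x A \<inter> Nx y (A - {x}). \<nu> r * t y r r') =
       (\<Sum>r\<in>Nx x A. if Mx r (A - {x}) = y then \<nu> r * t y r r' else 0)"
      by (simp add: sum.inter_filter)
  qed
  also have "\<dots> = (\<Sum>r\<in>Nx x A. \<Sum>y\<in>A - {x}. if Mx r (A - {x}) = y then \<nu> r * t y r r' else 0)"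
    by (rule sum.swap)
  also have "\<dots> = (\<Sum>r\<in>Nx x A. \<nu> r * t (Mx r (A - {x})) r r')"
  proof (rule sum.cong[OF refl])
    fix r :: "('a \<times> 'a) set" assume r: "r \<in> Nx x A"
    then have rL: "r \<in> LX" by (rule subsetD[OF Nx_sub])
    have "Mx r (A - {x}) \<in> A - {x}" by (rule Mx_max(1)[OF rL assms(2)])
    then show "(\<Sum>y\<in>A - {x}. if Mx r (A - {x}) = y then \<nu> r * t y r r' else 0) =
        \<nu> r * t (Mx r (A - {x})) r r'" by (simp add: sum.delta)
  qed
  also have "\<dots> = (\<Sum>r\<in>LX. if Mx r A = x then \<nu> r * t (Mx r (A - {x})) r r' else 0)"
    unfolding Nx_iff[OF assms(1)] by (simp add: sum.inter_filter)
  finally have R: "(\<Sum>y\<in>A - {x}. \<Sum>r\<in>Nx x A \<inter> Nx y (A - {x}). \<nu> r * t y r r') =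
     (\<Sum>r\<in>LX. if Mx r A = x then \<nu> r * t (Mx r (A - {x})) r r' else 0)" .
  have "TT t \<nu> A r' - TT t \<nu> (A - {x}) r' =
     (\<Sum>r\<in>LX. \<nu> r * t (Mx r A) r r' - \<nu> r * t (Mx r (A - {x})) r r')"
    unfolding TT_def by (simp add: sum_subtractf)
  also have "\<dots> = (\<Sum>r\<in>LX. (if Mx r A = x then \<nu> r * t x r r' else 0) -
      (if Mx r A = x then \<nu> r * t (Mx r (A - {x})) r r' else 0))"
  proof (rule sum.cong[OF refl])
    fix r :: "('a \<times> 'a) set" assume "r \<in> LX"
    then show "\<nu> r * t (Mx r A) r r' - \<nu> r * t (Mx r (A - {x})) r r' =
      (if Mx r A = x then \<nu> r * t x r r' else 0) -
      (if Mx r A = x then \<nu> r * t (Mx r (A - {x})) r r' else 0)"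
      using Mx_remove[OF _ assms(1)] by auto
  qed
  also have "\<dots> = (\<Sum>r\<in>Nx x A. \<nu> r * t x r r') -
        (\<Sum>y\<in>A - {x}. \<Sum>r\<in>Nx x A \<inter> Nx y (A - {x}). \<nu> r * t y r r')"
    unfolding L R by (simp add: sum_subtractf)
  finally show ?thesis by simp
qed

lemma li_iff:
  "locally_invariant t (\<nu> :: ('a::finite \<times> 'a) set \<Rightarrow> real) \<longleftrightarrow>
    (\<forall>A. 3 \<le> card A \<longrightarrow> (\<forall>x\<in>A. \<forall>r'\<in>LX. TT t \<nu> A r' = TT t \<nu> (A - {x}) r'))"
proof -
  have *: "A - {x} \<noteq> {}" if "3 \<le> card A" "x \<in> A" for A :: "'a set" and x
  proof
    assume "A - {x} = {}"
    then have "A \<subseteq> {x}" by auto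
    then have "card A \<le> 1" using card_mono[of "{x}" A] by simp
    then show False using that by simp
  qed
  have eq: "((\<Sum>r\<in>Nx x A. \<nu> r * t x r r') =
        (\<Sum>y\<in>A - {x}. \<Sum>r\<in>Nx x A \<inter> Nx y (A - {x}). \<nu> r * t y r r'))
     \<longleftrightarrow> (TT t \<nu> A r' = TT t \<nu> (A - {x}) r')"
    if "3 \<le> card A" "x \<in> A" for A :: "'a set" and x r' 
    using key[OF that(2) *[OF that], of \<nu> t r'] by linarith
  show ?thesis unfolding locally_invariant_def
  proof (intro iffI allI impI ballI)
    fix A :: "'a set" and x :: 'a and r' :: "('a \<times> 'a) set"
    assume H: "\<forall>A::'a set. 3 \<le> card A \<longrightarrow> (\<forall>x\<in>A. \<forall>r'\<in>LX. (\<Sum>r\<in>Nx x A. \<nu> r * t x r r') =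
        (\<Sum>y\<in>A - {x}. \<Sum>r\<in>Nx x A \<inter> Nx y (A - {x}). \<nu> r * t y r r'))"
      and c: "3 \<le> card A" and xA: "x \<in> A" and r': "r' \<in> LX"
    have "(\<Sum>r\<in>Nx x A. \<nu> r * t x r r') =
        (\<Sum>y\<in>A - {x}. \<Sum>r\<in>Nx x A \<inter> Nx y (A - {x}). \<nu> r * t y r r')"
      using H c xA r' by blast
    then show "TT t \<nu> A r' = TT t \<nu> (A - {x}) r'" using eq[OF c xA] by blast
  next
    fix A :: "'a set" and x :: 'a and r' :: "('a \<times> 'a) set"
    assume H: "\<forall>A::'a set. 3 \<le> card A \<longrightarrow> (\<forall>x\<in>A. \<forall>r'\<in>LX. TT t \<nu> A r' = TT t \<nu> (A - {x}) r')"
      and c: "3 \<le> card A" and xA: "x \<in> A" and r': "r' \<in> LX"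
    have "TT t \<nu> A r' = TT t \<nu> (A - {x}) r'" using H c xA r' by blast
    then show "(\<Sum>r\<in>Nx x A. \<nu> r * t x r r') =
        (\<Sum>y\<in>A - {x}. \<Sum>r\<in>Nx x A \<inter> Nx y (A - {x}). \<nu> r * t y r r')"
      using eq[OF c xA] by blast
  qed
qed

lemma uniq_le:
  assumes fs: "full_support_transition t"
    and dm: "is_dist \<mu>" and dn: "is_dist \<nu>"
    and sm: "\<forall>r'\<in>LX. \<mu> r' = TT t \<mu> A r'"
    and sn: "\<forall>r'\<in>LX. \<nu> r' = TT t \<nu> A r'"
    and r0: "(r0 :: ('a::finite \<times> 'a) set) \<in> LX"
  shows "\<mu> r0 \<le> \<nu> r0"
proof (rule ccontr)
  assume neg: "\<not> \<mu> r0 \<le> \<nu> r0"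
  define d where "d r = \<mu> r - \<nu> r" for r :: "('a \<times> 'a) set"
  define P where "P r r' = t (Mx r A) r r'" for r r' :: "('a \<times> 'a) set"
  have Ppos: "0 < P r r'" if "r \<in> LX" "r' \<in> LX" for r r'
    using fs that unfolding full_support_transition_def P_def by blast
  have Psum: "(\<Sum>r'\<in>LX. P r r') = 1" if "r \<in> LX" for r
    using fs that unfolding full_support_transition_def P_def by blast
  have dstat: "d r' = (\<Sum>r\<in>LX. d r * P r r')" if "r' \<in> LX" for r'
    using sm sn that unfolding d_def P_def TT_def by (simp add: left_diff_distrib sum_subtractf)
  have dsum: "(\<Sum>r\<in>LX. d r) = 0"
    using dm dn unfolding d_def is_dist_def by (simp add: sum_subtractf)
  define S where "S = {r \<in> LX. 0 < d r}"
  have r0S: "r0 \<in> S" using neg r0 unfolding S_def d_def by auto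
  obtain r1 where r1: "r1 \<in> LX" "d r1 < 0"
  proof (rule ccontr)
    assume "\<not> thesis"
    with that have "\<forall>r\<in>LX. 0 \<le> d r" by force
    then have "\<forall>r\<in>LX. d r = 0" using dsum sum_nonneg_eq_0_iff[of LX d] by simp
    then show False using r0S unfolding S_def by auto
  qed
  define Q where "Q r = (\<Sum>r'\<in>S. P r r')" for r :: "('a \<times> 'a) set"
  have Q1: "Q r \<le> 1" if "r \<in> LX" for r
  proof -
    have "Q r \<le> (\<Sum>r'\<in>LX. P r r')" unfolding Q_def
      by (rule sum_mono2) (use Ppos that in \<open>auto simp: S_def intro: less_imp_le\<close>)
    then show ?thesis using Psum that by simp
  qed
  have Q0: "0 < Q r" if "r \<in> LX" for r
    unfolding Q_def using r0S Ppos that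
    by (intro sum_pos) (auto simp: S_def)
  have "(\<Sum>r'\<in>S. d r') = (\<Sum>r'\<in>S. \<Sum>r\<in>LX. d r * P r r')"
    by (rule sum.cong[OF refl]) (use dstat in \<open>auto simp: S_def\<close>)
  also have "\<dots> = (\<Sum>r\<in>LX. d r * Q r)"
    unfolding Q_def by (simp add: sum.swap[of _ S] sum_distrib_left)
  also have "\<dots> < (\<Sum>r\<in>LX. max (d r) 0)"
  proof (rule sum_strict_mono_ex1[OF finite_LX[where 'a='a]])
    show "\<forall>r\<in>LX. d r * Q r \<le> max (d r) 0"
    proof
      fix r :: "('a \<times> 'a) set" assume r: "r \<in> LX"
      show "d r * Q r \<le> max (d r) 0"
      proof (cases "0 \<le> d r")
        case True then have "d r * Q r \<le> d r * 1" using Q1[OF r] by (intro mult_left_mono) auto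
        then show ?thesis by simp
      next
        case False then have "d r * Q r \<le> 0" using Q0[OF r] by (simp add: mult_nonpos_nonneg)
        then show ?thesis by simp
      qed
    qed
    show "\<exists>r\<in>LX. d r * Q r < max (d r) 0"
      using r1 Q0[OF r1(1)] by (intro bexI[of _ r1]) (auto simp: mult_neg_pos)
  qed
  also have "\<dots> = (\<Sum>r\<in>S. d r)"
  proof -
    have "(\<Sum>r\<in>LX. max (d r) 0) = (\<Sum>r\<in>LX. if 0 < d r then d r else 0)"
      by (rule sum.cong) auto
    then show ?thesis unfolding S_def by (simp add: sum.inter_filter)
  qed
  finally show False by simp
qed


theorem theorem1:
  fixes t :: "'a::finite \<Rightarrow> ('a \<times> 'a) set \<Rightarrow> ('a \<times> 'a) set \<Rightarrow> real"
    and \<nu> :: "'a set \<Rightarrow> ('a \<times> 'a) set \<Rightarrow> real"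
  assumes "2 \<le> card (UNIV :: 'a set)"
    and "full_support_transition t"
    and "\<forall>A\<in>X2. stationary t A (\<nu> A)"
  shows "(menu_invariant \<nu> \<longleftrightarrow> (\<forall>A\<in>X2. locally_invariant t (\<nu> A)))
       \<and> ((\<forall>A\<in>X2. locally_invariant t (\<nu> A)) \<longleftrightarrow> (\<exists>A\<in>X2. locally_invariant t (\<nu> A)))"
proof -
  have fs: "full_support_transition t" using assms(2) .
  have st: "\<forall>A\<in>X2. stationary t A (\<nu> A)" using assms(3) .
  have stat_iff: "stationary t A \<mu> \<longleftrightarrow> is_dist \<mu> \<and> (\<forall>r'\<in>LX. \<mu> r' = TT t \<mu> A r')"
    for A :: "'a set" and \<mu> :: "('a \<times> 'a) set \<Rightarrow> real"
    unfolding stationary_def TT_def by simp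
  have TT_cong: "TT t \<mu> C r' = TT t \<mu>' C r'" if "\<forall>r\<in>LX. \<mu> r = \<mu>' r"
    for C :: "'a set" and r' :: "('a \<times> 'a) set" and \<mu> \<mu>' :: "('a \<times> 'a) set \<Rightarrow> real"
    unfolding TT_def using that by (intro sum.cong) auto
  have uniq: "\<mu> r = \<mu>' r" if "stationary t A \<mu>" "stationary t A \<mu>'" "r \<in> LX"
    for A :: "'a set" and r :: "('a \<times> 'a) set" and \<mu> \<mu>' :: "('a \<times> 'a) set \<Rightarrow> real"
  proof -
    have a: "is_dist \<mu>" "\<forall>r'\<in>LX. \<mu> r' = TT t \<mu> A r'" using that(1) stat_iff by blast+
    have b: "is_dist \<mu>'" "\<forall>r'\<in>LX. \<mu>' r' = TT t \<mu>' A r'" using that(2) stat_iff by blast+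
    show ?thesis using uniq_le[OF fs a(1) b(1) a(2) b(2) that(3)] uniq_le[OF fs b(1) a(1) b(2) a(2) that(3)]
      by simp
  qed
  have X2I: "A \<in> X2" if "2 \<le> card A" for A :: "'a set" using that unfolding X2_def by simp
  have rem2: "2 \<le> card (A - {x})" if "3 \<le> card A" "x \<in> A" for A :: "'a set" and x
    using that by (simp add: card_Diff_singleton)
  have I12: "\<forall>A\<in>X2. locally_invariant t (\<nu> A)" if MI: "menu_invariant \<nu>"
  proof
    fix B :: "'a set" assume B: "B \<in> X2"
    have eqB: "\<nu> B r' = TT t (\<nu> B) C r'" if "C \<in> X2" "r' \<in> LX" for C :: "'a set" and r'
    proof -
      have mi: "\<forall>r\<in>LX. \<nu> B r = \<nu> C r" using MI B that(1) unfolding menu_invariant_def by blast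
      have "TT t (\<nu> B) C r' = TT t (\<nu> C) C r'" by (rule TT_cong[OF mi])
      also have "\<dots> = \<nu> C r'"
      proof -
        have "stationary t C (\<nu> C)" using st that(1) by blast
        then show ?thesis using that(2) unfolding stat_iff by simp
      qed
      also have "\<dots> = \<nu> B r'" using mi that(2) by simp
      finally show ?thesis by simp
    qed
    show "locally_invariant t (\<nu> B)" unfolding li_iff
    proof (intro allI impI ballI)
      fix A :: "'a set" and x :: 'a and r' :: "('a \<times> 'a) set" assume c: "3 \<le> card A" and xA: "x \<in> A" and r': "r' \<in> LX"
      have "A \<in> X2" using c X2I by simp
      moreover have "A - {x} \<in> X2" using rem2[OF c xA] X2I by simp
      ultimately show "TT t (\<nu> B) A r' = TT t (\<nu> B) (A - {x}) r'" using eqB r' by metis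
    qed
  qed
  have UX2: "(UNIV :: 'a set) \<in> X2" using assms(1) X2I by simp
  have I23: "\<exists>A\<in>X2. locally_invariant t (\<nu> A)" if "\<forall>A\<in>X2. locally_invariant t (\<nu> A)"
    using that UX2 by blast
  have I31: "menu_invariant \<nu>" if EX: "\<exists>A\<in>X2. locally_invariant t (\<nu> A)"
  proof -
    obtain B where B: "B \<in> X2" "locally_invariant t (\<nu> B)" using EX by blast
    define \<mu> where "\<mu> = \<nu> B"
    have LI: "\<forall>A. 3 \<le> card A \<longrightarrow> (\<forall>x\<in>A. \<forall>r'\<in>LX. TT t \<mu> A r' = TT t \<mu> (A - {x}) r')"
      using B(2) unfolding li_iff \<mu>_def .
    have claim: "\<forall>A :: 'a set. 2 \<le> card A \<longrightarrow> card (UNIV - A) = n \<longrightarrow>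
        (\<forall>r'\<in>LX. TT t \<mu> A r' = TT t \<mu> UNIV r')" for n
    proof (induction n)
      case 0
      show ?case
      proof (intro allI impI)
        fix A :: "'a set" assume "card (UNIV - A) = 0"
        then have "UNIV - A = {}" by simp
        then have "A = UNIV" by blast
        then show "\<forall>r'\<in>LX. TT t \<mu> A r' = TT t \<mu> UNIV r'" by simp
      qed
    next
      case (Suc n)
      show ?case
      proof (intro allI impI)
        fix A :: "'a set" assume c2: "2 \<le> card A" and cn: "card (UNIV - A) = Suc n"
        have "UNIV - A \<noteq> {}"
        proof
          assume "UNIV - A = {}"
          then have "card (UNIV - A) = 0" by (simp only: card.empty)
          then show False using cn by simp
        qed
        then obtain z where z: "z \<notin> A" by blast
        define A' where "A' = insert z A"
        have cA': "card A' = Suc (card A)" unfolding A'_def using z by simp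
        have "UNIV - A' = (UNIV - A) - {z}" unfolding A'_def by blast
        then have "card (UNIV - A') = n" using cn z by (simp add: card_Diff_singleton)
        then have IH: "\<forall>r'\<in>LX. TT t \<mu> A' r' = TT t \<mu> UNIV r'"
          using Suc.IH cA' c2 by simp
        have AA: "A' - {z} = A" unfolding A'_def using z by blast
        have "\<forall>r'\<in>LX. TT t \<mu> A' r' = TT t \<mu> (A' - {z}) r'"
        proof -
          have "3 \<le> card A'" using cA' c2 by simp
          moreover have "z \<in> A'" unfolding A'_def by simp
          ultimately show ?thesis using LI by blast
        qed
        then show "\<forall>r'\<in>LX. TT t \<mu> A r' = TT t \<mu> UNIV r'" using IH AA by simp
      qed
    qed
    have muB: "\<forall>r'\<in>LX. \<mu> r' = TT t \<mu> B r'" "is_dist \<mu>"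
      using st B(1) stat_iff unfolding \<mu>_def by blast+
    have statA: "stationary t A \<mu>" if "A \<in> X2" for A :: "'a set"
    proof -
      have "\<forall>r'\<in>LX. \<mu> r' = TT t \<mu> A r'"
      proof
        fix r' :: "('a \<times> 'a) set" assume r': "r' \<in> LX"
        have cB: "2 \<le> card B" using B(1) unfolding X2_def by simp
        have cA: "2 \<le> card A" using that unfolding X2_def by simp
        have "\<mu> r' = TT t \<mu> B r'" using muB r' by blast
        also have "\<dots> = TT t \<mu> UNIV r'" using claim cB r' by blast
        also have "\<dots> = TT t \<mu> A r'" using claim cA r' by metis
        finally show "\<mu> r' = TT t \<mu> A r'" .
      qed
      then show ?thesis using stat_iff muB(2) by blast
    qed
    have "\<forall>A\<in>X2. \<forall>r\<in>LX. \<nu> A r = \<mu> r"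
      using uniq st statA by blast
    then show ?thesis unfolding menu_invariant_def by simp
  qed
  show ?thesis using I12 I23 I31 by blast
qed


end
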